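(* Let $(A,\dashv,\vdash,\perp)$ be an associative trialgebra. Define $$[x,y]:=x\dashv y-y\vdash x\qquad\text{and}\qquad xy:=x\perp y.$$ Then the following hold. (i) The product $xy$ is associative. (ii) The bracket satisfies the (right) Leibniz identity $[[x,y],z]=[[x,z],y]+[x,[y,z]]$. (iii) For all $x,y,z\in A$, $$[xy,z]=x[y,z]+[x,z]y\qquad\text{and}\qquad [x,\,yz-zy]=[x,[y,z]].$$ That is, $(A,xy,[\,,\,])$ is a noncommutative Poisson algebra.
   Context: Let $K$ be a field. An associative trialgebra is a $K$-vector space $A$ with three bilinear operations $\dashv,\vdash,\perp$ satisfying for all $x,y,z\in A$ the following 11 relations: (1) $(x\dashv y)\dashv z=x\dashv(y\dashv z)$; (2) $(x\dashv y)\dashv z=x\dashv(y\vdash z)$; (3) $(x\vdash y)\dashv z=x\vdash(y\dashv z)$; (4) $(x\dashv y)\vdash z=x\vdash(y\vdash z)$; (5) $(x\vdash y)\vdash z=x\vdash(y\vdash z)$; (6) $(x\dashv y)\dashv z=x\dashv(y\perp z)$; (7) $(x\perp y)\dashv z=x\perp(y\dashv z)$; (8) $(x\dashv y)\perp z=x\perp(y\vdash z)$; (9) $(x\vdash y)\perp z=x\vdash(y\perp z)$; (10) $(x\perp y)\vdash z=x\vdash(y\vdash z)$; (11) $(x\perp y)\perp z=x\perp(y\perp z)$. *)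

theory Defs
  imports Complex_Main
begin

definition bilinear_op :: "('k::field \<Rightarrow> 'v::ab_group_add \<Rightarrow> 'v) \<Rightarrow> ('v \<Rightarrow> 'v \<Rightarrow> 'v) \<Rightarrow> bool" where
  "bilinear_op scale m \<longleftrightarrow>
     (\<forall>x. Vector_Spaces.linear scale scale (m x)) \<and> (\<forall>y. Vector_Spaces.linear scale scale (\<lambda>x. m x y))"

text \<open>Associative trialgebra: the 11 relations, with l = dashv, r = vdash, p = perp.\<close>
definition assoc_trialgebra ::
  "('k::field \<Rightarrow> 'v::ab_group_add \<Rightarrow> 'v) \<Rightarrow> ('v \<Rightarrow> 'v \<Rightarrow> 'v) \<Rightarrow> ('v \<Rightarrow> 'v \<Rightarrow> 'v) \<Rightarrow> ('v \<Rightarrow> 'v \<Rightarrow> 'v) \<Rightarrow> bool" where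
  "assoc_trialgebra scale l r p \<longleftrightarrow>
     Vector_Spaces.vector_space scale \<and> bilinear_op scale l \<and> bilinear_op scale r \<and> bilinear_op scale p \<and>
     (\<forall>x y z.
        l (l x y) z = l x (l y z) \<and>
        l (l x y) z = l x (r y z) \<and>
        l (r x y) z = r x (l y z) \<and>
        r (l x y) z = r x (r y z) \<and>
        r (r x y) z = r x (r y z) \<and>
        l (l x y) z = l x (p y z) \<and>
        l (p x y) z = p x (l y z) \<and>
        p (l x y) z = p x (r y z) \<and>
        p (r x y) z = r x (p y z) \<and>
        r (p x y) z = r x (r y z) \<and>
        p (p x y) z = p x (p y z))"

end

theory Submission
  imports Defs
begin

lemma bil_diff:
  assumes "bilinear_op scale m"
  shows "m x (a - b) = m x a - m x b" "m (a - b) y = m a y - m b y"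
proof -
  from assms have "Vector_Spaces.linear scale scale (m x)" unfolding bilinear_op_def by blast
  then have "Vector_Spaces.linear scale scale (m x)" .
  then interpret L: Vector_Spaces.linear scale scale "m x" .
  show "m x (a - b) = m x a - m x b" by (rule L.diff)
next
  from assms have "Vector_Spaces.linear scale scale (\<lambda>x. m x y)" unfolding bilinear_op_def by blast
  then interpret L: Vector_Spaces.linear scale scale "\<lambda>x. m x y" .
  show "m (a - b) y = m a y - m b y" using L.diff[of a b] by simp
qed

theorem proposition1p16:
  fixes scale :: "'k::field \<Rightarrow> 'v::ab_group_add \<Rightarrow> 'v"
    and l r p :: "'v \<Rightarrow> 'v \<Rightarrow> 'v"
  assumes "assoc_trialgebra scale l r p"
  defines "br \<equiv> (\<lambda>x y. l x y - r y x)"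
  shows "(\<forall>x y z. p (p x y) z = p x (p y z))
       \<and> (\<forall>x y z. br (br x y) z = br (br x z) y + br x (br y z))
       \<and> (\<forall>x y z. br (p x y) z = p x (br y z) + p (br x z) y)
       \<and> (\<forall>x y z. br x (p y z - p z y) = br x (br y z))"
proof -
  have bl: "bilinear_op scale l" and brr: "bilinear_op scale r" and bp: "bilinear_op scale p"
    and ax: "\<And>x y z. l (l x y) z = l x (l y z) \<and>
        l (l x y) z = l x (r y z) \<and>
        l (r x y) z = r x (l y z) \<and>
        r (l x y) z = r x (r y z) \<and>
        r (r x y) z = r x (r y z) \<and>
        l (l x y) z = l x (p y z) \<and>
        l (p x y) z = p x (l y z) \<and>
        p (l x y) z = p x (r y z) \<and>
        p (r x y) z = r x (p y z) \<and>
        r (p x y) z = r x (r y z) \<and>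
        p (p x y) z = p x (p y z)"
    using assms(1) unfolding assoc_trialgebra_def by blast+
  note d = bil_diff[OF bl] bil_diff[OF brr] bil_diff[OF bp]
  have a1: "\<And>x y z. l x (l y z) = l (l x y) z" using ax by metis
  have a2: "\<And>x y z. l x (r y z) = l (l x y) z" using ax by metis
  have a3: "\<And>x y z. r x (l y z) = l (r x y) z" using ax by metis
  have a4: "\<And>x y z. r (l x y) z = r x (r y z)" using ax by metis
  have a5: "\<And>x y z. r (r x y) z = r x (r y z)" using ax by metis
  have a6: "\<And>x y z. l x (p y z) = l (l x y) z" using ax by metis
  have a7: "\<And>x y z. l (p x y) z = p x (l y z)" using ax by metis
  have a8: "\<And>x y z. p x (r y z) = p (l x y) z" using ax by metis
  have a9: "\<And>x y z. p (r x y) z = r x (p y z)" using ax by metis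
  have a10: "\<And>x y z. r (p x y) z = r x (r y z)" using ax by metis
  have a11: "\<And>x y z. p (p x y) z = p x (p y z)" using ax by metis
  show ?thesis unfolding br_def
    by (simp add: d a1 a2 a3 a4 a5 a6 a7 a8 a9 a10 a11 algebra_simps)
qed

end
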